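(* Let $K^*\in\mathbb{N}$, $M>0$, $p\in\mathbb{N}$, let $\mathcal{Y}\subset\mathbb{R}^{K^*}$ be a compact set, let $f_*:[-M,M]^p\to\mathcal{Y}$ be continuous, and let $g_*:\mathcal{Y}^2\to\mathbb{R}$ be a conditionally positive definite kernel. Let $\sigma:\mathbb{R}\to\mathbb{R}$ be either the ReLU function or a function that is non-constant, continuous, bounded and monotonically increasing. Then for every $\varepsilon>0$ there exist constants $C>0$ and $r_0>0$ such that for every $r\ge r_0$ there exist $K\in\mathbb{N}$, $T=T(K)\in\mathbb{N}$, $\boldsymbol A\in\mathbb{R}^{K\times T}$, $\boldsymbol B\in\mathbb{R}^{T\times p}$, $\boldsymbol c\in\mathbb{R}^T$ and $\gamma\in\mathbb{R}$ with $|\gamma|\le C r^2$ such that \[ \Big| g_*\big(f_*(\boldsymbol x),f_*(\boldsymbol x')\big) - \big( \langle f_{\boldsymbol\psi}(\boldsymbol x), f_{\boldsymbol\psi}(\boldsymbol x')\rangle - \gamma\big)\Big| < \varepsilon + C r^{-2} \] for all $(\boldsymbol x,\boldsymbol x')\in[-M,M]^{2p}$, where $f_{\boldsymbol\psi}(\boldsymbol x)=\boldsymbol A\,\boldsymbol\sigma(\boldsymbol B\boldsymbol x+\boldsymbol c)\in\mathbb{R}^K$ and $\boldsymbol\sigma$ denotes $\sigma$ applied element-wise.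
   Context: A kernel on $\mathcal{Y}^2$ is a symmetric continuous function $g:\mathcal{Y}^2\to\mathbb{R}$. A kernel $g$ is conditionally positive definite (CPD) if $\sum_{i=1}^n\sum_{j=1}^n c_ic_j g(\boldsymbol y_i,\boldsymbol y_j)\ge 0$ for all $n\in\mathbb{N}$, all $\boldsymbol y_1,\dots,\boldsymbol y_n\in\mathcal{Y}$ and all $c_1,\dots,c_n\in\mathbb{R}$ with $\sum_{i=1}^n c_i=0$. $\langle\cdot,\cdot\rangle$ is the Euclidean inner product. *)

theory Defs
  imports "HOL-Analysis.Analysis"
begin

definition is_kernel :: "'a::topological_space set \<Rightarrow> ('a \<Rightarrow> 'a \<Rightarrow> real) \<Rightarrow> bool" where
  "is_kernel Y g \<longleftrightarrow> (\<forall>y\<in>Y. \<forall>z\<in>Y. g y z = g z y)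
      \<and> continuous_on (Y \<times> Y) (\<lambda>(y, z). g y z)"

definition cpd_kernel :: "'a::topological_space set \<Rightarrow> ('a \<Rightarrow> 'a \<Rightarrow> real) \<Rightarrow> bool" where
  "cpd_kernel Y g \<longleftrightarrow> is_kernel Y g \<and>
     (\<forall>(n::nat) (y::nat \<Rightarrow> 'a) (c::nat \<Rightarrow> real).
        (\<forall>i<n. y i \<in> Y) \<longrightarrow> (\<Sum>i<n. c i) = 0 \<longrightarrow>
        (\<Sum>i<n. \<Sum>j<n. c i * c j * g (y i) (y j)) \<ge> 0)"

definition relu :: "real \<Rightarrow> real" where
  "relu x = max 0 x"

definition admissible_activation :: "(real \<Rightarrow> real) \<Rightarrow> bool" where
  "admissible_activation \<sigma> \<longleftrightarrow> \<sigma> = relu \<or>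
     ((\<exists>a b. \<sigma> a \<noteq> \<sigma> b) \<and> continuous_on UNIV \<sigma> \<and> bounded (range \<sigma>) \<and> mono \<sigma>)"

definition cube :: "real \<Rightarrow> (real ^ 'p) set" where
  "cube M = {x. \<forall>i. \<bar>x $ i\<bar> \<le> M}"

text \<open>Shallow network f_psi(x) = A sigma(B x + c) in R^K (components k < K),
  with A a K x T matrix, B a T x p matrix, c in R^T.\<close>
definition shallow_net ::
  "(real \<Rightarrow> real) \<Rightarrow> nat \<Rightarrow> (nat \<Rightarrow> nat \<Rightarrow> real) \<Rightarrow> (nat \<Rightarrow> 'p::finite \<Rightarrow> real)
     \<Rightarrow> (nat \<Rightarrow> real) \<Rightarrow> real ^ 'p \<Rightarrow> nat \<Rightarrow> real" where
  "shallow_net \<sigma> T A B c x k = (\<Sum>t<T. A k t * \<sigma> ((\<Sum>j\<in>UNIV. B t j * x $ j) + c t))"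

definition innerK :: "nat \<Rightarrow> (nat \<Rightarrow> real) \<Rightarrow> (nat \<Rightarrow> real) \<Rightarrow> real" where
  "innerK K u v = (\<Sum>k<K. u k * v k)"

end

theory Submission
  imports Defs
begin

lemma sum_lessThan_add_split:
  "(\<Sum>t<a+b. f t) = (\<Sum>t<a. f t) + (\<Sum>t<b. f (a+t))" for f :: "nat \<Rightarrow> real"
  by (induction b) (auto simp: add.commute)

definition isnet :: "(real \<Rightarrow> real) \<Rightarrow> (real ^ 'p::finite \<Rightarrow> nat \<Rightarrow> real) \<Rightarrow> bool" where
  "isnet \<sigma> F \<longleftrightarrow> (\<exists>T A B c. \<forall>x k. F x k = shallow_net \<sigma> T A B c x k)"

lemma isnet_zero: "isnet \<sigma> (\<lambda>x k. 0)"
  unfolding isnet_def shallow_net_def by (rule exI[of _ 0]) auto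

lemma isnet_add:
  assumes "isnet \<sigma> F" "isnet \<sigma> G"
  shows "isnet \<sigma> (\<lambda>x k. F x k + G x k)"
proof -
  obtain T1 A1 B1 c1 where 1: "\<And>x k. F x k = shallow_net \<sigma> T1 A1 B1 c1 x k"
    using assms(1) unfolding isnet_def by blast
  obtain T2 A2 B2 c2 where 2: "\<And>x k. G x k = shallow_net \<sigma> T2 A2 B2 c2 x k"
    using assms(2) unfolding isnet_def by blast
  define A where "A k t = (if t < T1 then A1 k t else A2 k (t - T1))" for k t
  define B where "B t = (if t < T1 then B1 t else B2 (t - T1))" for t
  define c where "c t = (if t < T1 then c1 t else c2 (t - T1))" for t
  have "F x k + G x k = shallow_net \<sigma> (T1+T2) A B c x k" for x k
    unfolding 1 2 shallow_net_def sum_lessThan_add_split A_def B_def c_def by simp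
  then show ?thesis unfolding isnet_def by blast
qed

lemma isnet_sum:
  fixes m :: nat
  assumes "\<And>i. i < m \<Longrightarrow> isnet \<sigma> (F i)"
  shows "isnet \<sigma> (\<lambda>x k. \<Sum>i<m. F i x k)"
  using assms
proof (induction m)
  case 0 then show ?case using isnet_zero by simp
next
  case (Suc m)
  have "isnet \<sigma> (\<lambda>x k. (\<Sum>i<m. F i x k) + F m x k)"
    by (rule isnet_add) (use Suc in auto)
  then show ?case by simp
qed

lemma isnet_select:
  assumes "isnet \<sigma> F"
  shows "isnet \<sigma> (\<lambda>x k. if k = l then F x 0 else 0)"
proof -
  obtain T A B c where 1: "\<And>x k. F x k = shallow_net \<sigma> T A B c x k"
    using assms unfolding isnet_def by blast
  define A' where "A' k t = (if k = l then A 0 t else 0)" for k t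
  have "(if k = l then F x 0 else 0) = shallow_net \<sigma> T A' B c x k" for x k
    unfolding 1 shallow_net_def A'_def by simp
  then show ?thesis unfolding isnet_def by blast
qed

lemma isnet_scale:
  assumes "isnet \<sigma> F"
  shows "isnet \<sigma> (\<lambda>x k. d * F x k)"
proof -
  obtain T A B c where 1: "\<And>x k. F x k = shallow_net \<sigma> T A B c x k"
    using assms unfolding isnet_def by blast
  define A' where "A' k t = d * A k t" for k t
  have "d * F x k = shallow_net \<sigma> T A' B c x k" for x k
    unfolding 1 shallow_net_def A'_def by (simp add: sum_distrib_left mult.assoc)
  then show ?thesis unfolding isnet_def by blast
qed

definition tau :: "(real \<Rightarrow> real) \<Rightarrow> real \<Rightarrow> real" where
  "tau \<sigma> = (if \<sigma> = relu then (\<lambda>s. relu s - relu (s - 1)) else \<sigma>)"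

lemma isnet_unit:
  "isnet \<sigma> (\<lambda>x k. a * tau \<sigma> ((\<Sum>j\<in>UNIV. W j * x $ j) + b))"
proof (cases "\<sigma> = relu")
  case True
  define A where "A k t = (if t = 0 then a else - a)" for k t :: nat
  define c where "c t = (if t = 0 then b else b - 1)" for t :: nat
  have "a * tau \<sigma> ((\<Sum>j\<in>UNIV. W j * x $ j) + b) = shallow_net \<sigma> 2 A (\<lambda>_. W) c x k" for x k
    unfolding shallow_net_def A_def c_def tau_def using True
    by (simp add: numeral_2_eq_2 algebra_simps)
  then show ?thesis unfolding isnet_def by blast
next
  case False
  have "a * tau \<sigma> ((\<Sum>j\<in>UNIV. W j * x $ j) + b) = shallow_net \<sigma> 1 (\<lambda>_ _. a) (\<lambda>_. W) (\<lambda>_. b) x k" for x k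
    unfolding shallow_net_def tau_def using False by simp
  then show ?thesis unfolding isnet_def by blast
qed

lemma tau_props:
  assumes "admissible_activation \<sigma>"
  shows "mono (tau \<sigma>)" "bdd_above (range (tau \<sigma>))" "bdd_below (range (tau \<sigma>))"
    "\<exists>a b. tau \<sigma> a \<noteq> tau \<sigma> b"
proof -
  have "mono (tau \<sigma>) \<and> bdd_above (range (tau \<sigma>)) \<and> bdd_below (range (tau \<sigma>)) \<and> (\<exists>a b. tau \<sigma> a \<noteq> tau \<sigma> b)"
  proof (cases "\<sigma> = relu")
    case True
    have m: "mono (tau \<sigma>)" unfolding mono_def tau_def True relu_def by auto
    have r: "range (tau \<sigma>) \<subseteq> {0..1}" unfolding tau_def True relu_def by auto
    have "tau \<sigma> 0 \<noteq> tau \<sigma> 1" unfolding tau_def True relu_def by auto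
    then show ?thesis using m r bdd_above_mono bdd_below_mono
      by (metis bdd_above_Icc bdd_below_Icc)
  next
    case False
    then have "tau \<sigma> = \<sigma>" unfolding tau_def by simp
    with False assms show ?thesis unfolding admissible_activation_def
      by (auto intro: bounded_imp_bdd_above bounded_imp_bdd_below)
  qed
  then show "mono (tau \<sigma>)" "bdd_above (range (tau \<sigma>))" "bdd_below (range (tau \<sigma>))"
    "\<exists>a b. tau \<sigma> a \<noteq> tau \<sigma> b" by auto
qed

lemma isnet_const:
  assumes "admissible_activation \<sigma>"
  shows "isnet \<sigma> (\<lambda>x k. d)"
proof -
  obtain z where z: "tau \<sigma> z \<noteq> 0" using tau_props(4)[OF assms] by metis
  have "isnet \<sigma> (\<lambda>x k. (d / tau \<sigma> z) * tau \<sigma> ((\<Sum>j\<in>UNIV. 0 * x $ j) + z))"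
    by (rule isnet_unit)
  then show ?thesis using z by simp
qed

lemma approx_1d:
  fixes \<tau> F :: "real \<Rightarrow> real" and \<alpha> \<beta> \<eta> :: real
  assumes mono: "mono \<tau>" and ba: "bdd_above (range \<tau>)" and bb: "bdd_below (range \<tau>)"
    and nc: "\<tau> a0 \<noteq> \<tau> b0" and cF: "continuous_on {\<alpha>..\<beta>} F" and ab: "\<alpha> < \<beta>" and eta: "\<eta> > 0"
  shows "\<exists>(N::nat) c0 a v b. \<forall>s\<in>{\<alpha>..\<beta>}. \<bar>F s - (c0 + (\<Sum>k<N. a k * \<tau> (v k * s + b k)))\<bar> < \<eta>"
proof -
  define Lp where "Lp = Sup (range \<tau>)"
  define Lm where "Lm = Inf (range \<tau>)"
  have up: "\<tau> z \<le> Lp" for z unfolding Lp_def using ba by (simp add: cSup_upper)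
  have lo: "Lm \<le> \<tau> z" for z unfolding Lm_def using bb by (simp add: cInf_lower)
  have "Lm < Lp" proof -
    from nc have "\<tau> a0 < \<tau> b0 \<or> \<tau> b0 < \<tau> a0" by auto
    then show ?thesis using up[of a0] up[of b0] lo[of a0] lo[of b0] by linarith
  qed 
  define D where "D = Lp - Lm"
  have D: "D > 0" using \<open>Lm < Lp\<close> D_def by simp
  have "uniformly_continuous_on {\<alpha>..\<beta>} F"
    using compact_uniformly_continuous[OF cF] by simp
  then obtain d where d: "d > 0" and
    dF: "\<And>x x'. x \<in> {\<alpha>..\<beta>} \<Longrightarrow> x' \<in> {\<alpha>..\<beta>} \<Longrightarrow> dist x' x < d \<Longrightarrow> dist (F x') (F x) < \<eta>/4"
    unfolding uniformly_continuous_on_def using eta by (metis divide_pos_pos zero_less_numeral)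
  define N :: nat where "N = nat \<lceil>(\<beta> - \<alpha>)/d\<rceil> + 1"
  have N: "N > 0" unfolding N_def by simp
  define h where "h = (\<beta> - \<alpha>) / N"
  have h: "h > 0" unfolding h_def using ab N by simp
  have "(\<beta> - \<alpha>)/d < N" unfolding N_def by linarith
  then have "h < d" unfolding h_def using d N by (simp add: field_simps)
  define t where "t k = \<alpha> + real k * h" for k :: nat
  have tN: "t N = \<beta>" unfolding t_def h_def using N by simp
  have tin: "k \<le> N \<Longrightarrow> t k \<in> {\<alpha>..\<beta>}" for k
  proof -
    assume "k \<le> N"
    then have "real k * h \<le> real N * h" using h by (simp add: mult_right_mono)
    then show ?thesis using tN h unfolding t_def by auto
  qed
  define \<theta> where "\<theta> = 1 / (real N + 1)"
  have \<theta>: "\<theta> > 0" "real N * \<theta> < 1" unfolding \<theta>_def by (auto simp: field_simps)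
  obtain zp where zp: "\<tau> zp > Lp - \<theta> * D"
  proof -
    have "Lp - \<theta> * D < Sup (range \<tau>)" using \<theta> D Lp_def by simp
    then show ?thesis using that less_cSup_iff[OF _ ba] by auto
  qed
  obtain zm where zm: "\<tau> zm < Lm + \<theta> * D"
  proof -
    have "Inf (range \<tau>) < Lm + \<theta> * D" using \<theta> D Lm_def by simp
    then show ?thesis using that cInf_less_iff[OF _ bb] by auto
  qed
  define Z where "Z = \<bar>zp\<bar> + \<bar>zm\<bar> + 1"
  define sl where "sl = 2 * Z / h"
  have lam: "sl > 0" unfolding sl_def Z_def using h by simp
  have lamh: "sl * (h/2) = Z" unfolding sl_def using h by simp
  define m where "m k = \<alpha> + (real k + 1/2) * h" for k :: nat
  define H where "H k s = (\<tau> (sl * (s - m k)) - Lm) / D" for k s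
  have H01: "0 \<le> H k s \<and> H k s \<le> 1" for k s
    unfolding H_def using up lo D D_def by (auto simp: field_simps)
  have Hhi: "s - m k \<ge> h/2 \<Longrightarrow> \<bar>H k s - 1\<bar> \<le> \<theta>" for k s
  proof -
    assume "s - m k \<ge> h/2"
    then have "sl * (h/2) \<le> sl * (s - m k)" using lam by (intro mult_left_mono) auto
    then have "sl * (s - m k) \<ge> Z" using lamh by simp
    then have "sl * (s - m k) \<ge> zp" unfolding Z_def by linarith
    then have "\<tau> (sl * (s - m k)) \<ge> \<tau> zp" using mono by (simp add: monoD)
    then have "\<tau> (sl * (s - m k)) - Lm \<ge> (1 - \<theta>) * D" using zp unfolding D_def by (simp add: algebra_simps)
    then have "H k s \<ge> 1 - \<theta>" unfolding H_def using D by (simp add: le_divide_eq)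
    then show ?thesis using H01[of k s] by simp
  qed
  have Hlo: "m k - s \<ge> h/2 \<Longrightarrow> \<bar>H k s\<bar> \<le> \<theta>" for k s
  proof -
    assume "m k - s \<ge> h/2"
    then have "sl * (h/2) \<le> sl * (m k - s)" using lam by (intro mult_left_mono) auto
    then have "sl * (m k - s) \<ge> Z" using lamh by simp
    then have "sl * (s - m k) \<le> zm" unfolding Z_def by (simp add: algebra_simps)
    then have "\<tau> (sl * (s - m k)) \<le> \<tau> zm" using mono by (simp add: monoD)
    then have "\<tau> (sl * (s - m k)) - Lm \<le> \<theta> * D" using zm unfolding D_def by (simp add: algebra_simps)
    then have "H k s \<le> \<theta>" unfolding H_def using D by (simp add: divide_le_eq)
    then show ?thesis using H01[of k s] by simp
  qed
  define \<Delta> where "\<Delta> k = F (t (Suc k)) - F (t k)" for k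
  have \<Delta>: "k < N \<Longrightarrow> \<bar>\<Delta> k\<bar> \<le> \<eta>/4" for k
  proof -
    assume k: "k < N"
    have i1: "t (Suc k) \<in> {\<alpha>..\<beta>}" "t k \<in> {\<alpha>..\<beta>}" using tin k by auto
    have i2: "dist (t (Suc k)) (t k) < d" using \<open>h < d\<close> h by (simp add: t_def dist_real_def algebra_simps)
    have "dist (F (t (Suc k))) (F (t k)) < \<eta>/4"
      by (rule dF[OF i1(2) i1(1) i2])
    then show ?thesis unfolding \<Delta>_def dist_real_def by simp
  qed
  define G where "G s = F \<alpha> + (\<Sum>k<N. \<Delta> k * H k s)" for s
  have main: "\<bar>F s - G s\<bar> < \<eta>" if s: "s \<in> {\<alpha>..\<beta>}" for s
  proof -
    define j where "j = min (N - 1) (nat \<lfloor>(s - \<alpha>)/h\<rfloor>)"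
    have jN: "j < N" unfolding j_def using N by simp
    have tj: "t j \<le> s"
    proof -
      have "j \<le> nat \<lfloor>(s - \<alpha>)/h\<rfloor>" unfolding j_def by simp
      then have "real j \<le> real (nat \<lfloor>(s - \<alpha>)/h\<rfloor>)" by simp
      also have "\<dots> \<le> (s - \<alpha>)/h" using s h by (intro of_nat_floor) simp
      finally have "real j \<le> (s - \<alpha>)/h" .
      then show ?thesis unfolding t_def using h by (simp add: field_simps)
    qed
    have tj1: "s \<le> t (Suc j)"
    proof (cases "nat \<lfloor>(s - \<alpha>)/h\<rfloor> \<le> N - 1")
      case True
      then have "j = nat \<lfloor>(s - \<alpha>)/h\<rfloor>" unfolding j_def by simp
      moreover have "(s - \<alpha>)/h < real (nat \<lfloor>(s - \<alpha>)/h\<rfloor>) + 1" using s h by linarith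
      ultimately show ?thesis unfolding t_def using h by (simp add: field_simps)
    next
      case False
      then have "j = N - 1" unfolding j_def by simp
      then have "Suc j = N" using N by simp
      then show ?thesis using tN s by simp
    qed
    have Fj: "F (t j) = F \<alpha> + (\<Sum>k<N. \<Delta> k * (if k < j then 1 else 0))"
    proof -
      have "(\<Sum>k<N. \<Delta> k * (if k < j then 1 else 0)) = (\<Sum>k\<in>{..<N} \<inter> {k. k < j}. \<Delta> k)"
        by (simp add: sum.inter_restrict if_distrib cong: if_cong)
      also have "{..<N} \<inter> {k. k < j} = {..<j}" using jN by auto
      also have "(\<Sum>k<j. \<Delta> k) = F (t j) - F (t 0)" unfolding \<Delta>_def by (rule sum_lessThan_telescope)
      finally show ?thesis unfolding t_def by simp
    qed
    have e1: "\<bar>F s - F (t j)\<bar> < \<eta>/4"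
    proof -
      have i1: "t j \<in> {\<alpha>..\<beta>}" using tin jN by auto
      have "t (Suc j) - t j = h" by (simp add: t_def algebra_simps)
      then have i2: "dist s (t j) < d" using \<open>h < d\<close> tj tj1 by (simp add: dist_real_def)
      have "dist (F s) (F (t j)) < \<eta>/4"
        by (rule dF[OF i1 s i2])
      then show ?thesis by (simp add: dist_real_def)
    qed
    have trm: "\<bar>\<Delta> k * (H k s - (if k < j then 1 else 0))\<bar> \<le> \<eta>/4 * (\<theta> + (if k = j then 1 else 0))"
      if k: "k < N" for k
    proof -
      have b: "\<bar>H k s - (if k < j then 1 else 0)\<bar> \<le> \<theta> + (if k = j then 1 else 0)"
      proof (cases "k < j")
        case True
        then have "Suc k \<le> j" by simp
        then have "t (Suc k) \<le> t j" unfolding t_def using h by (simp add: mult_right_mono)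
        then have "s - m k \<ge> h/2" using tj unfolding m_def t_def by (simp add: algebra_simps)
        then show ?thesis using Hhi True \<theta> by auto
      next
        case False
        show ?thesis
        proof (cases "k = j")
          case True then show ?thesis using H01[of k s] \<theta> by auto
        next
          case False2: False
          with False have "Suc j \<le> k" by simp
          then have "t (Suc j) \<le> t k" unfolding t_def using h by (simp add: mult_right_mono)
          then have "m k - s \<ge> h/2" using tj1 unfolding m_def t_def by (simp add: algebra_simps)
          then show ?thesis using Hlo False False2 by auto
        qed
      qed
      have "\<bar>\<Delta> k * (H k s - (if k < j then 1 else 0))\<bar> = \<bar>\<Delta> k\<bar> * \<bar>H k s - (if k < j then 1 else 0)\<bar>"
        by (simp add: abs_mult)
      also have "\<dots> \<le> \<eta>/4 * (\<theta> + (if k = j then 1 else 0))"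
        by (rule mult_mono) (use \<Delta>[OF k] b \<theta> eta in auto)
      finally show ?thesis .
    qed
    have "G s - F (t j) = (\<Sum>k<N. \<Delta> k * (H k s - (if k < j then 1 else 0)))"
      unfolding G_def Fj by (simp add: sum_subtractf algebra_simps)
    have "\<bar>G s - F (t j)\<bar> \<le> (\<Sum>k<N. \<eta>/4 * (\<theta> + (if k = j then 1 else 0)))"
      unfolding \<open>G s - F (t j) = _\<close> by (rule order_trans[OF sum_abs sum_mono]) (use trm in auto)
    also have "\<dots> = \<eta>/4 * (\<Sum>k<N. \<theta> + (if k = j then 1 else 0))" by (rule sum_distrib_left[symmetric])
    also have "\<dots> = \<eta>/4 * (real N * \<theta> + 1)" using jN by (simp add: sum.distrib)
    also have "\<dots> < \<eta>/4 * 2" using \<theta> eta by (intro mult_strict_left_mono) auto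
    finally show ?thesis using e1 by linarith
  qed
  define c0 where "c0 = F \<alpha> - (\<Sum>k<N. \<Delta> k * Lm / D)"
  define a where "a k = \<Delta> k / D" for k
  have "G s = c0 + (\<Sum>k<N. a k * \<tau> (sl * s + (- sl * m k)))" for s
  proof -
    have "G s = F \<alpha> + (\<Sum>k<N. a k * \<tau> (sl * s + (- sl * m k)) - \<Delta> k * Lm / D)"
      unfolding G_def H_def a_def using D by (intro arg_cong2[where f="(+)"] sum.cong)
        (auto simp: field_simps)
    then show ?thesis unfolding c0_def by (simp add: sum_subtractf)
  qed
  then have "\<forall>s\<in>{\<alpha>..\<beta>}. \<bar>F s - (c0 + (\<Sum>k<N. a k * \<tau> (sl * s + (- sl * m k))))\<bar> < \<eta>"
    using main by metis
  then have "\<forall>s\<in>{\<alpha>..\<beta>}. \<bar>F s - (c0 + (\<Sum>k<N. a k * \<tau> ((\<lambda>_. sl) k * s + (\<lambda>k. - sl * m k) k)))\<bar> < \<eta>"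
    by simp
  note fin = this
  show ?thesis apply (rule exI[where x=N]) apply (rule exI[where x=c0]) apply (rule exI[where x=a]) apply (rule exI[where x="\<lambda>_. sl"])
    apply (rule exI[where x="\<lambda>k. - sl * m k"]) by (rule fin)
qed

inductive_set expset :: "(real ^ 'p::finite \<Rightarrow> real) set" where
  base: "(\<lambda>x. c * exp (w \<bullet> x)) \<in> expset"
| add: "f \<in> expset \<Longrightarrow> g \<in> expset \<Longrightarrow> (\<lambda>x. f x + g x) \<in> expset"

lemma expset_mult_base:
  assumes "g \<in> expset"
  shows "(\<lambda>x. (c * exp (w \<bullet> x)) * g x) \<in> expset"
  using assms
proof induction
  case (base c' w')
  have "(\<lambda>x. (c * exp (w \<bullet> x)) * (c' * exp (w' \<bullet> x))) = (\<lambda>x. (c * c') * exp ((w + w') \<bullet> x))"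
    by (auto simp: inner_add_left exp_add)
  then show ?case using expset.base[of "c * c'" "w + w'"] by simp
next
  case (add f g)
  have "(\<lambda>x. (c * exp (w \<bullet> x)) * (f x + g x)) = (\<lambda>x. (c * exp (w \<bullet> x)) * f x + (c * exp (w \<bullet> x)) * g x)"
    by (auto simp: algebra_simps)
  then show ?case using expset.add[OF add.IH] by simp
qed

lemma expset_mult:
  assumes "f \<in> expset" "g \<in> expset"
  shows "(\<lambda>x. f x * g x) \<in> expset"
  using assms
proof induction
  case (base c w)
  then show ?case by (rule expset_mult_base)
next
  case (add f1 f2)
  have "(\<lambda>x. (f1 x + f2 x) * g x) = (\<lambda>x. f1 x * g x + f2 x * g x)"
    by (auto simp: algebra_simps)
  then show ?case using expset.add[OF add.IH(1) add.IH(2)] add.prems by simp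
qed

lemma expset_cont: "f \<in> expset \<Longrightarrow> continuous_on S f"
  by (induction rule: expset.induct) (auto intro!: continuous_intros)

lemma inner_vec_sum: "w \<bullet> x = (\<Sum>j\<in>UNIV. w $ j * x $ j)" for w x :: "real ^ 'p::finite"
  by (simp add: inner_vec_def)

lemma expset_ring:
  assumes "compact S"
  shows "function_ring_on (expset :: (real ^ 'p::finite \<Rightarrow> real) set) S"
proof
  show "compact S" by fact
  show "continuous_on S f" if "f \<in> expset" for f using expset_cont that by blast
  show "(\<lambda>x. f x + g x) \<in> expset" if "f \<in> expset" "g \<in> expset" for f g
    using that by (rule expset.add)
  show "(\<lambda>x. f x * g x) \<in> expset" if "f \<in> expset" "g \<in> expset" for f g
    using that by (rule expset_mult)
  show "(\<lambda>_. c) \<in> expset" for c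
    using expset.base[of c 0] by simp
  show "\<exists>f\<in>expset. f x \<noteq> f y" if "x \<noteq> y" for x y :: "real ^ 'p"
  proof -
    from that have "\<exists>i. x $ i \<noteq> y $ i" by (simp add: vec_eq_iff)
    then obtain i where i: "x $ i \<noteq> y $ i" ..
    define w :: "real ^ 'p" where "w = (\<chi> j. if j = i then 1 else 0)"
    have wz: "w \<bullet> z = z $ i" for z
    proof -
      have "w \<bullet> z = (\<Sum>j\<in>UNIV. if j = i then z $ j else 0)"
        unfolding inner_vec_sum w_def by (rule sum.cong) auto
      also have "\<dots> = z $ i" by simp
      finally show ?thesis .
    qed
    have m: "(\<lambda>z. 1 * exp (w \<bullet> z)) \<in> expset" by (rule expset.base)
    have n: "1 * exp (w \<bullet> x) \<noteq> 1 * exp (w \<bullet> y)" unfolding wz using i by simp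
    show ?thesis using m n by (intro bexI[where P="\<lambda>f. f x \<noteq> f y" and x="\<lambda>z. 1 * exp (w \<bullet> z)"]) simp_all
  qed
qed

lemma isnet_cong: "isnet \<sigma> F \<Longrightarrow> (\<And>x k. F x k = G x k) \<Longrightarrow> isnet \<sigma> G"
proof -
  assume "isnet \<sigma> F" "\<And>x k. F x k = G x k"
  moreover have "F = G" using calculation(2) by (intro ext) 
  ultimately show ?thesis by simp
qed

lemma expset_approx:
  assumes adm: "admissible_activation \<sigma>" and bS: "bounded S"
  shows "e \<in> expset \<Longrightarrow> \<eta> > 0 \<Longrightarrow> \<exists>F. isnet \<sigma> F \<and> (\<forall>x\<in>S. \<bar>e x - F x 0\<bar> < \<eta>)"
proof (induction arbitrary: \<eta> rule: expset.induct)
  case (base c w)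
  obtain R where R: "R > 0" "\<And>x. x \<in> S \<Longrightarrow> norm x \<le> R" using bS by (auto simp: bounded_pos)
  define R1 where "R1 = norm w * R + 1"
  have R1: "R1 > 0" unfolding R1_def using R by (simp add: add_nonneg_pos)
  have inR: "w \<bullet> x \<in> {-R1..R1}" if "x \<in> S" for x
  proof -
    have "\<bar>w \<bullet> x\<bar> \<le> norm w * norm x" by (rule Cauchy_Schwarz_ineq2)
    also have "\<dots> \<le> norm w * R" using R(2)[OF that] by (simp add: mult_left_mono)
    finally show ?thesis unfolding R1_def by auto
  qed
  obtain a0 b0 where nc: "tau \<sigma> a0 \<noteq> tau \<sigma> b0" using tau_props(4)[OF adm] by blast
  have "continuous_on {-R1..R1} (\<lambda>s. c * exp s)" by (intro continuous_intros)
  from approx_1d[OF tau_props(1-3)[OF adm] nc this _ base.prems] R1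
  obtain N :: nat and c0 a v b where ap: "\<forall>s\<in>{-R1..R1}. \<bar>c * exp s - (c0 + (\<Sum>k<N. a k * tau \<sigma> (v k * s + b k)))\<bar> < \<eta>"
    by auto
  define F where "F x k = c0 + (\<Sum>i<N. a i * tau \<sigma> ((\<Sum>j\<in>UNIV. (v i * w $ j) * x $ j) + b i))"
    for x :: "real ^ 'a" and k :: nat
  have "isnet \<sigma> (\<lambda>x k. c0 + (\<Sum>i<N. a i * tau \<sigma> ((\<Sum>j\<in>UNIV. (v i * w $ j) * x $ j) + b i)))"
    by (intro isnet_add isnet_const[OF adm] isnet_sum isnet_unit)
  then have "isnet \<sigma> F" unfolding F_def by simp
  moreover have "\<bar>c * exp (w \<bullet> x) - F x 0\<bar> < \<eta>" if "x \<in> S" for x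
  proof -
    have eq: "v i * (w \<bullet> x) + b i = (\<Sum>j\<in>UNIV. (v i * w $ j) * x $ j) + b i" for i
      by (simp add: inner_vec_sum sum_distrib_left mult.assoc)
    have "\<bar>c * exp (w \<bullet> x) - (c0 + (\<Sum>k<N. a k * tau \<sigma> (v k * (w \<bullet> x) + b k)))\<bar> < \<eta>"
      using ap inR[OF that] by blast
    then show ?thesis unfolding F_def eq .
  qed
  ultimately show ?case by blast
next
  case (add f g)
  have h2: "\<eta>/2 > 0" using add.prems by simp
  obtain F1 where F1: "isnet \<sigma> F1" "\<forall>x\<in>S. \<bar>f x - F1 x 0\<bar> < \<eta>/2" using add.IH(1)[OF h2] by blast
  obtain F2 where F2: "isnet \<sigma> F2" "\<forall>x\<in>S. \<bar>g x - F2 x 0\<bar> < \<eta>/2" using add.IH(2)[OF h2] by blast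
  have "isnet \<sigma> (\<lambda>x k. F1 x k + F2 x k)" using F1(1) F2(1) by (rule isnet_add)
  moreover have "\<forall>x\<in>S. \<bar>(f x + g x) - (F1 x 0 + F2 x 0)\<bar> < \<eta>"
  proof
    fix x assume "x \<in> S"
    then have "\<bar>f x - F1 x 0\<bar> < \<eta>/2" "\<bar>g x - F2 x 0\<bar> < \<eta>/2" using F1 F2 by auto
    then show "\<bar>(f x + g x) - (F1 x 0 + F2 x 0)\<bar> < \<eta>" by linarith
  qed
  ultimately show ?case by (intro exI[of _ "\<lambda>x k. F1 x k + F2 x k"]) simp
qed

lemma universal_approx:
  fixes S :: "(real ^ 'p::finite) set"
  assumes adm: "admissible_activation \<sigma>" and S: "compact S" and c: "continuous_on S \<phi>" and eta: "\<eta> > 0"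
  shows "\<exists>F. isnet \<sigma> F \<and> (\<forall>x\<in>S. \<bar>\<phi> x - F x 0\<bar> < \<eta>)"
proof -
  interpret function_ring_on expset S by (rule expset_ring[OF S])
  have h2: "\<eta>/2 > 0" using eta by simp
  obtain e where e: "e \<in> expset" "\<forall>x\<in>S. \<bar>\<phi> x - e x\<bar> < \<eta>/2"
    using Stone_Weierstrass_basic[OF c h2] by blast
  obtain F where F: "isnet \<sigma> F" "\<forall>x\<in>S. \<bar>e x - F x 0\<bar> < \<eta>/2"
    using expset_approx[OF adm compact_imp_bounded[OF S] e(1) h2] by blast
  have "\<forall>x\<in>S. \<bar>\<phi> x - F x 0\<bar> < \<eta>"
  proof
    fix x assume "x \<in> S"
    then have "\<bar>\<phi> x - e x\<bar> < \<eta>/2" "\<bar>e x - F x 0\<bar> < \<eta>/2" using e F by auto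
    then show "\<bar>\<phi> x - F x 0\<bar> < \<eta>" by linarith
  qed
  with F(1) show ?thesis by blast
qed

lemma pd_step_identity:
  fixes P :: "nat \<Rightarrow> nat \<Rightarrow> real" and a b :: "nat \<Rightarrow> real"
  assumes sym: "\<forall>i<Suc n. \<forall>j<Suc n. P i j = P j i" and d: "P n n > 0"
  shows "(\<Sum>i<Suc n. \<Sum>j<Suc n. a i * b j * P i j) =
     (\<Sum>i<n. \<Sum>j<n. a i * b j * (P i j - P i n * P n j / P n n))
     + (\<Sum>i<Suc n. P n i * a i) * (\<Sum>j<Suc n. P n j * b j) / P n n"
proof -
  define d where "d = P n n"
  define \<alpha> where "\<alpha> = (\<Sum>i<n. P n i * a i)"
  define \<beta> where "\<beta> = (\<Sum>j<n. P n j * b j)"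
  have symn: "P i n = P n i" if "i < n" for i using sym that by auto
  have "(\<Sum>i<Suc n. \<Sum>j<Suc n. a i * b j * P i j) =
      (\<Sum>i<n. \<Sum>j<n. a i * b j * P i j) + (\<Sum>i<n. a i * b n * P i n)
      + (\<Sum>j<n. a n * b j * P n j) + a n * b n * d"
    by (simp add: sum.distrib d_def algebra_simps)
  also have "(\<Sum>i<n. a i * b n * P i n) = b n * \<alpha>"
    unfolding \<alpha>_def sum_distrib_left by (rule sum.cong) (auto simp: symn)
  also have "(\<Sum>j<n. a n * b j * P n j) = a n * \<beta>"
    unfolding \<beta>_def sum_distrib_left by (rule sum.cong) (auto simp: symn)
  finally have L: "(\<Sum>i<Suc n. \<Sum>j<Suc n. a i * b j * P i j) =
      (\<Sum>i<n. \<Sum>j<n. a i * b j * P i j) + b n * \<alpha> + a n * \<beta> + a n * b n * d" .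
  have "(\<Sum>i<n. \<Sum>j<n. a i * b j * (P i j - P i n * P n j / P n n)) =
      (\<Sum>i<n. \<Sum>j<n. a i * b j * P i j) - (\<Sum>i<n. \<Sum>j<n. (P n i * a i) * (P n j * b j) / d)"
  proof -
    have "(\<Sum>i<n. \<Sum>j<n. a i * b j * (P i j - P i n * P n j / P n n)) =
      (\<Sum>i<n. \<Sum>j<n. a i * b j * P i j - (P n i * a i) * (P n j * b j) / d)"
      by (intro sum.cong refl) (simp add: symn d_def algebra_simps)
    then show ?thesis by (simp add: sum_subtractf)
  qed
  also have "(\<Sum>i<n. \<Sum>j<n. (P n i * a i) * (P n j * b j) / d) = \<alpha> * \<beta> / d"
    unfolding \<alpha>_def \<beta>_def sum_product sum_divide_distrib by simp
  finally have R1: "(\<Sum>i<n. \<Sum>j<n. a i * b j * (P i j - P i n * P n j / P n n)) =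
      (\<Sum>i<n. \<Sum>j<n. a i * b j * P i j) - \<alpha> * \<beta> / d" .
  have R2: "(\<Sum>i<Suc n. P n i * a i) * (\<Sum>j<Suc n. P n j * b j) / P n n = (\<alpha> + d * a n) * (\<beta> + d * b n) / d"
    unfolding \<alpha>_def \<beta>_def d_def by (simp add: algebra_simps)
  have "d > 0" using d d_def by simp
  then have "(\<alpha> + d * a n) * (\<beta> + d * b n) / d = \<alpha> * \<beta> / d + b n * \<alpha> + a n * \<beta> + a n * b n * d"
    by (simp add: field_simps)
  then show ?thesis unfolding L R1 R2 by simp
qed

lemma pd_factor:
  fixes n :: nat and P :: "nat \<Rightarrow> nat \<Rightarrow> real"
  assumes "\<forall>i<n. \<forall>j<n. P i j = P j i"
    and "\<forall>a. (\<exists>i<n. a i \<noteq> 0) \<longrightarrow> (\<Sum>i<n. \<Sum>j<n. a i * a j * P i j) > 0"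
  shows "\<exists>L. \<forall>a b. (\<Sum>i<n. \<Sum>j<n. a i * b j * P i j) = (\<Sum>l<n. (\<Sum>i<n. L l i * a i) * (\<Sum>j<n. L l j * b j))"
  using assms
proof (induction n arbitrary: P)
  case 0
  then show ?case by simp
next
  case (Suc n)
  note sym = Suc.prems(1) and pd = Suc.prems(2)
  define d where "d = P n n"
  have "d > 0"
  proof -
    define e where "e i = (if i = n then 1 else (0::real))" for i
    have "(\<Sum>i<Suc n. \<Sum>j<Suc n. e i * e j * P i j) > 0" by (rule pd[rule_format]) (auto simp: e_def)
    moreover have "(\<Sum>i<Suc n. \<Sum>j<Suc n. e i * e j * P i j) = d"
      unfolding e_def d_def by (simp add: if_distrib cong: if_cong)
    ultimately show ?thesis by simp
  qed
  define P' where "P' i j = P i j - P i n * P n j / P n n" for i j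
  have id: "(\<Sum>i<Suc n. \<Sum>j<Suc n. a i * b j * P i j) =
     (\<Sum>i<n. \<Sum>j<n. a i * b j * P' i j)
     + (\<Sum>i<Suc n. P n i * a i) * (\<Sum>j<Suc n. P n j * b j) / d" for a b
    unfolding P'_def d_def by (rule pd_step_identity) (use sym \<open>d > 0\<close> d_def in auto)
  have sym': "\<forall>i<n. \<forall>j<n. P' i j = P' j i"
    unfolding P'_def using sym by auto
  have pd': "\<forall>a. (\<exists>i<n. a i \<noteq> 0) \<longrightarrow> (\<Sum>i<n. \<Sum>j<n. a i * a j * P' i j) > 0"
  proof (intro allI impI)
    fix a :: "nat \<Rightarrow> real" assume "\<exists>i<n. a i \<noteq> 0"
    then obtain i0 where i0: "i0 < n" "a i0 \<noteq> 0" by blast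
    define a' where "a' i = (if i < n then a i else if i = n then - (\<Sum>j<n. P n j * a j) / d else 0)" for i
    have "(\<Sum>i<Suc n. \<Sum>j<Suc n. a' i * a' j * P i j) > 0"
      by (rule pd[rule_format]) (use i0 in \<open>auto simp: a'_def\<close>)
    moreover have "(\<Sum>i<Suc n. P n i * a' i) = 0"
    proof -
      have "(\<Sum>i<Suc n. P n i * a' i) = (\<Sum>i<n. P n i * a' i) + d * a' n" by (simp add: d_def)
      also have "(\<Sum>i<n. P n i * a' i) = (\<Sum>i<n. P n i * a i)" by (rule sum.cong) (auto simp: a'_def)
      finally show ?thesis using \<open>d > 0\<close> by (simp add: a'_def)
    qed
    moreover have "(\<Sum>i<n. \<Sum>j<n. a' i * a' j * P' i j) = (\<Sum>i<n. \<Sum>j<n. a i * a j * P' i j)"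
      by (intro sum.cong) (auto simp: a'_def)
    ultimately show "(\<Sum>i<n. \<Sum>j<n. a i * a j * P' i j) > 0" using id[of a' a'] by simp
  qed
  obtain L' where L': "\<And>a b. (\<Sum>i<n. \<Sum>j<n. a i * b j * P' i j) = (\<Sum>l<n. (\<Sum>i<n. L' l i * a i) * (\<Sum>j<n. L' l j * b j))"
    using Suc.IH[OF sym' pd'] by blast
  define L where "L l i = (if l < n then (if i < n then L' l i else 0) else P n i / sqrt d)" for l i
  have "(\<Sum>i<Suc n. \<Sum>j<Suc n. a i * b j * P i j) = (\<Sum>l<Suc n. (\<Sum>i<Suc n. L l i * a i) * (\<Sum>j<Suc n. L l j * b j))" for a b
  proof -
    have A: "(\<Sum>i<Suc n. L l i * a i) = (\<Sum>i<n. L' l i * a i)" if "l < n" for l a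
      using that by (simp add: L_def)
    have B: "(\<Sum>i<Suc n. L n i * a i) = (\<Sum>i<Suc n. P n i * a i) / sqrt d" for a
      by (simp add: L_def sum_divide_distrib add_divide_distrib)
    have "(\<Sum>l<Suc n. (\<Sum>i<Suc n. L l i * a i) * (\<Sum>j<Suc n. L l j * b j)) =
        (\<Sum>l<n. (\<Sum>i<n. L' l i * a i) * (\<Sum>j<n. L' l j * b j)) +
        (\<Sum>i<Suc n. P n i * a i) / sqrt d * ((\<Sum>j<Suc n. P n j * b j) / sqrt d)"
    proof -
      have sp: "(\<Sum>l<Suc n. X l) = (\<Sum>l<n. X l) + X n" for X :: "nat \<Rightarrow> real" by simp
      have "(\<Sum>l<n. (\<Sum>i<Suc n. L l i * a i) * (\<Sum>j<Suc n. L l j * b j)) =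
          (\<Sum>l<n. (\<Sum>i<n. L' l i * a i) * (\<Sum>j<n. L' l j * b j))"
      proof (rule sum.cong)
        fix l assume "l \<in> {..<n}"
        then have l: "l < n" by simp
        show "(\<Sum>i<Suc n. L l i * a i) * (\<Sum>j<Suc n. L l j * b j) = (\<Sum>i<n. L' l i * a i) * (\<Sum>j<n. L' l j * b j)"
          by (simp only: A[OF l])
      qed simp
      then show ?thesis unfolding sp[of "\<lambda>l. (\<Sum>i<Suc n. L l i * a i) * (\<Sum>j<Suc n. L l j * b j)"] B
        by simp
    qed
    also have "(\<Sum>i<Suc n. P n i * a i) / sqrt d * ((\<Sum>j<Suc n. P n j * b j) / sqrt d)
        = (\<Sum>i<Suc n. P n i * a i) * (\<Sum>j<Suc n. P n j * b j) / d"
      using \<open>d > 0\<close> by (simp add: field_simps)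
    finally show ?thesis unfolding id L'[symmetric] by simp
  qed
  then show ?case by blast
qed

lemma bil_expand:
  fixes a b U V :: "nat \<Rightarrow> real" and H :: "nat \<Rightarrow> nat \<Rightarrow> real"
  shows "(\<Sum>i<n. \<Sum>j<n. a i * b j * (H i j - U i - V j + k0 + (if i = j then \<eta> else 0))) =
    (\<Sum>i<n. \<Sum>j<n. a i * b j * H i j) - (\<Sum>i<n. a i * U i) * (\<Sum>j<n. b j)
    - (\<Sum>i<n. a i) * (\<Sum>j<n. b j * V j) + k0 * (\<Sum>i<n. a i) * (\<Sum>j<n. b j) + \<eta> * (\<Sum>i<n. a i * b i)"
proof -
  have "(\<Sum>i<n. \<Sum>j<n. a i * b j * (H i j - U i - V j + k0 + (if i = j then \<eta> else 0))) =
     (\<Sum>i<n. \<Sum>j<n. a i * b j * H i j) - (\<Sum>i<n. \<Sum>j<n. (a i * U i) * b j)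
     - (\<Sum>i<n. \<Sum>j<n. a i * (b j * V j)) + (\<Sum>i<n. \<Sum>j<n. k0 * a i * b j)
     + (\<Sum>i<n. \<Sum>j<n. if i = j then \<eta> * (a i * b j) else 0)"
  proof -
    have pt: "a i * b j * (H i j - U i - V j + k0 + (if i = j then \<eta> else 0)) =
      a i * b j * H i j - (a i * U i) * b j - a i * (b j * V j) + k0 * a i * b j + (if i = j then \<eta> * (a i * b j) else 0)" for i j
      by (cases "i = j") (simp_all add: algebra_simps)
    show ?thesis by (simp only: pt sum.distrib sum_subtractf)
  qed
  also have "(\<Sum>i<n. \<Sum>j<n. if i = j then \<eta> * (a i * b j) else 0) = \<eta> * (\<Sum>i<n. a i * b i)"
    by (simp add: sum_distrib_left)
  finally have X: "(\<Sum>i<n. \<Sum>j<n. a i * b j * (H i j - U i - V j + k0 + (if i = j then \<eta> else 0))) =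
     (\<Sum>i<n. \<Sum>j<n. a i * b j * H i j) - (\<Sum>i<n. \<Sum>j<n. (a i * U i) * b j)
     - (\<Sum>i<n. \<Sum>j<n. a i * (b j * V j)) + (\<Sum>i<n. \<Sum>j<n. k0 * a i * b j)
     + \<eta> * (\<Sum>i<n. a i * b i)" .
  have h1: "(\<Sum>i<n. \<Sum>j<n. (a i * U i) * b j) = (\<Sum>i<n. a i * U i) * (\<Sum>j<n. b j)"
    by (rule sum_product[symmetric])
  have h2: "(\<Sum>i<n. \<Sum>j<n. a i * (b j * V j)) = (\<Sum>i<n. a i) * (\<Sum>j<n. b j * V j)"
    by (rule sum_product[symmetric])
  have h3: "(\<Sum>i<n. \<Sum>j<n. k0 * a i * b j) = k0 * (\<Sum>i<n. a i) * (\<Sum>j<n. b j)"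
  proof -
    have "k0 * (\<Sum>i<n. a i) = (\<Sum>i<n. k0 * a i)" by (rule sum_distrib_left)
    then show ?thesis by (simp only: sum_product)
  qed
  show ?thesis using X unfolding h1 h2 h3 .
qed

lemma sum_split_Suc2:
  fixes F :: "nat \<Rightarrow> nat \<Rightarrow> real"
  shows "(\<Sum>i<Suc n. \<Sum>j<Suc n. F i j) = (\<Sum>i<n. \<Sum>j<n. F i j) + (\<Sum>i<n. F i n) + (\<Sum>j<n. F n j) + F n n"
  by (simp add: sum.distrib)

lemma kernel_approx:
  fixes S :: "(real ^ 'p::finite) set" and h :: "real ^ 'p \<Rightarrow> real ^ 'p \<Rightarrow> real"
  assumes S: "compact S" "S \<noteq> {}"
    and hc: "continuous_on (S \<times> S) (\<lambda>z. h (fst z) (snd z))"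
    and hs: "\<forall>x\<in>S. \<forall>y\<in>S. h x y = h y x"
    and hcpd: "\<forall>(m::nat) (y::nat \<Rightarrow> real^'p) (c::nat \<Rightarrow> real). (\<forall>i<m. y i \<in> S) \<longrightarrow> (\<Sum>i<m. c i) = 0 \<longrightarrow>
        (\<Sum>i<m. \<Sum>j<m. c i * c j * h (y i) (y j)) \<ge> 0"
    and e: "\<epsilon> > 0"
  shows "\<exists>(n::nat) \<phi> u \<kappa>. (\<forall>l. continuous_on S (\<phi> l)) \<and> continuous_on S u \<and>
     (\<forall>x\<in>S. \<forall>x'\<in>S. \<bar>h x x' - ((\<Sum>l<n. \<phi> l x * \<phi> l x') + u x + u x' + \<kappa>)\<bar> \<le> \<epsilon>)"
proof -
  have e2: "\<epsilon>/2 > 0" using e by simp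
  have ucS: "uniformly_continuous_on (S \<times> S) (\<lambda>z. h (fst z) (snd z))"
    by (rule compact_uniformly_continuous[OF hc compact_Times[OF S(1) S(1)]])
  have "\<exists>d>0. \<forall>z\<in>S \<times> S. \<forall>z'\<in>S \<times> S. dist z' z < d \<longrightarrow> dist (h (fst z') (snd z')) (h (fst z) (snd z)) < \<epsilon>/2"
    using mp[OF spec[OF ucS[unfolded uniformly_continuous_on_def], of "\<epsilon>/2"] e2] .
  then obtain \<delta>1 where \<delta>1: "\<delta>1 > 0" and
    uc: "\<forall>z\<in>S \<times> S. \<forall>z'\<in>S \<times> S. dist z' z < \<delta>1 \<longrightarrow> dist (h (fst z') (snd z')) (h (fst z) (snd z)) < \<epsilon>/2"
    by blast
  have hclose: "\<bar>h x x' - h y y'\<bar> < \<epsilon>/2"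
    if "x \<in> S" "x' \<in> S" "y \<in> S" "y' \<in> S" "dist x y < \<delta>1/2" "dist x' y' < \<delta>1/2" for x x' y y'
  proof -
    have "dist (y, y') (x, x') = sqrt ((dist y x)\<^sup>2 + (dist y' x')\<^sup>2)" by (rule dist_Pair_Pair)
    also have "\<dots> \<le> dist y x + dist y' x'" by (rule sqrt_sum_squares_le_sum) auto
    also have "\<dots> < \<delta>1" using that(5,6) by (simp add: dist_commute)
    finally have d1: "dist (y, y') (x, x') < \<delta>1" .
    have m1: "(x, x') \<in> S \<times> S" "(y, y') \<in> S \<times> S" using that by auto
    have "dist (h (fst (y, y')) (snd (y, y'))) (h (fst (x, x')) (snd (x, x'))) < \<epsilon>/2"
      by (rule uc[rule_format, OF m1(1) m1(2) d1])
    then have "dist (h y y') (h x x') < \<epsilon>/2" by simp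
    then show ?thesis by (simp add: dist_real_def abs_minus_commute)
  qed
  define \<delta> where "\<delta> = \<delta>1/4"
  have \<delta>: "\<delta> > 0" unfolding \<delta>_def using \<delta>1 by simp
  have "\<exists>k. finite k \<and> k \<subseteq> S \<and> S \<subseteq> (\<Union>x\<in>k. ball x \<delta>)"
    using seq_compact_imp_totally_bounded[OF compact_imp_seq_compact[OF S(1)], rule_format, OF \<delta>] .
  then obtain k where k: "finite k" "k \<subseteq> S" "S \<subseteq> (\<Union>x\<in>k. ball x \<delta>)"
    by (elim exE conjE)
  have "k \<noteq> {}" using k(3) S(2) by auto
  define n where "n = card k"
  have n: "n > 0" unfolding n_def using k(1) \<open>k \<noteq> {}\<close> by (simp add: card_gt_0_iff)
  obtain pts where pts: "bij_betw pts {0..<n} k" unfolding n_def using ex_bij_betw_nat_finite[OF k(1)] by blast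
  have pim: "pts ` {..<n} = k" using pts by (simp add: bij_betw_def atLeast0LessThan)
  have pS: "pts i \<in> S" if "i < n" for i
  proof -
    have "pts i \<in> pts ` {..<n}" using that by simp
    then show ?thesis using pim k(2) by (simp add: subset_iff)
  qed
  have cover: "\<exists>i<n. dist (pts i) x < \<delta>" if "x \<in> S" for x
  proof -
    have "x \<in> (\<Union>q\<in>k. ball q \<delta>)" using k(3) that by (rule subsetD)
    then obtain q where "q \<in> k" "x \<in> ball q \<delta>" by (rule UN_E)
    then obtain i where "i < n" "pts i = q" using pim by auto
    then show ?thesis using \<open>x \<in> ball q \<delta>\<close> by auto
  qed
  define \<rho> where "\<rho> i x = max 0 (2 * \<delta> - dist x (pts i))" for i x
  define D where "D x = (\<Sum>i<n. \<rho> i x)" for x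
  have \<rho>0: "\<rho> i x \<ge> 0" for i x unfolding \<rho>_def by simp
  have Dpos: "D x > 0" if xS: "x \<in> S" for x
  proof -
    obtain i where i: "i < n" "dist (pts i) x < \<delta>" using cover[OF xS] by blast
    have "\<rho> i x > 0" unfolding \<rho>_def using i \<delta> by (simp add: dist_commute)
    also have "\<rho> i x \<le> D x" unfolding D_def by (rule member_le_sum) (use i \<rho>0 in auto)
    finally show ?thesis .
  qed
  define \<psi> where "\<psi> i x = \<rho> i x / D x" for i x
  have \<psi>0: "\<psi> i x \<ge> 0" if "x \<in> S" for i x unfolding \<psi>_def using \<rho>0 Dpos[OF that] by simp
  have \<psi>sum: "(\<Sum>i<n. \<psi> i x) = 1" if "x \<in> S" for x
    unfolding \<psi>_def sum_divide_distrib[symmetric] D_def[symmetric] using Dpos[OF that] by simp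
  have \<psi>supp: "dist x (pts i) < 2 * \<delta>" if "\<psi> i x \<noteq> 0" for i x
    using that unfolding \<psi>_def \<rho>_def by (auto split: if_splits simp: max_def)
  have \<rho>cont: "continuous_on S (\<rho> i)" for i unfolding \<rho>_def by (intro continuous_intros)
  have Dcont: "continuous_on S D" unfolding D_def by (intro continuous_intros \<rho>cont)
  have \<psi>cont: "continuous_on S (\<psi> i)" for i
    unfolding \<psi>_def using Dpos by (intro continuous_intros \<rho>cont Dcont) (metis less_irrefl)
  define y0 where "y0 = pts 0"
  have y0: "y0 \<in> S" unfolding y0_def using pS n by simp
  define H where "H i j = h (pts i) (pts j)" for i j
  define U where "U i = h (pts i) y0" for i
  define V where "V j = h y0 (pts j)" for j
  define k0 where "k0 = h y0 y0"
  define \<eta> where "\<eta> = \<epsilon>/2"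
  have \<eta>: "\<eta> > 0" unfolding \<eta>_def using e by simp
  define P where "P i j = H i j - U i - V j + k0 + (if i = j then \<eta> else 0)" for i j
  have UV: "i < n \<Longrightarrow> V i = U i" for i unfolding U_def V_def using hs pS y0 by auto
  have Psym: "\<forall>i<n. \<forall>j<n. P i j = P j i"
    unfolding P_def H_def using hs pS UV by auto
  have Ppd: "\<forall>a. (\<exists>i<n. a i \<noteq> 0) \<longrightarrow> (\<Sum>i<n. \<Sum>j<n. a i * a j * P i j) > 0"
  proof (intro allI impI)
    fix a :: "nat \<Rightarrow> real" assume "\<exists>i<n. a i \<noteq> 0"
    then obtain i0 where i0: "i0 < n" "a i0 \<noteq> 0" by blast
    define s where "s = (\<Sum>i<n. a i)"
    define yy where "yy i = (if i < n then pts i else y0)" for i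
    define c where "c i = (if i < n then a i else - s)" for i
    have yyS: "yy i \<in> S" if "i < Suc n" for i unfolding yy_def using pS y0 by auto
    have c0: "(\<Sum>i<Suc n. c i) = 0"
    proof -
      have "(\<Sum>i<n. c i) = s" unfolding s_def c_def by simp
      then show ?thesis by (simp add: c_def)
    qed
    have cpos: "(\<Sum>i<Suc n. \<Sum>j<Suc n. c i * c j * h (yy i) (yy j)) \<ge> 0"
      using hcpd[rule_format, OF yyS c0] .
    have "(\<Sum>i<Suc n. \<Sum>j<Suc n. c i * c j * h (yy i) (yy j)) =
        (\<Sum>i<n. \<Sum>j<n. a i * a j * H i j) + (\<Sum>i<n. a i * (- s) * U i) + (\<Sum>j<n. (- s) * a j * V j) + (- s) * (- s) * k0"
      unfolding sum_split_Suc2 by (simp add: c_def yy_def H_def U_def V_def k0_def)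
    also have "\<dots> = (\<Sum>i<n. \<Sum>j<n. a i * a j * H i j) - (\<Sum>i<n. a i * U i) * (\<Sum>j<n. a j)
        - (\<Sum>i<n. a i) * (\<Sum>j<n. a j * V j) + k0 * (\<Sum>i<n. a i) * (\<Sum>j<n. a j)"
      unfolding s_def by (simp add: sum_distrib_left sum_distrib_right sum_negf algebra_simps)
    finally have A: "0 \<le> (\<Sum>i<n. \<Sum>j<n. a i * a j * H i j) - (\<Sum>i<n. a i * U i) * (\<Sum>j<n. a j)
        - (\<Sum>i<n. a i) * (\<Sum>j<n. a j * V j) + k0 * (\<Sum>i<n. a i) * (\<Sum>j<n. a j)" using cpos by simp
    have B: "(\<Sum>i<n. a i * a i) > 0"
      by (rule sum_pos2[of _ i0]) (use i0 in \<open>auto simp: zero_less_mult_iff linorder_neq_iff\<close>)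
    show "(\<Sum>i<n. \<Sum>j<n. a i * a j * P i j) > 0"
      unfolding P_def bil_expand using A B \<eta> by (simp add: add_nonneg_pos)
  qed
  obtain L where L: "\<And>a b. (\<Sum>i<n. \<Sum>j<n. a i * b j * P i j) = (\<Sum>l<n. (\<Sum>i<n. L l i * a i) * (\<Sum>j<n. L l j * b j))"
    using pd_factor[OF Psym Ppd] by blast
  define \<phi> where "\<phi> l x = (\<Sum>i<n. L l i * \<psi> i x)" for l x
  define u where "u x = (\<Sum>i<n. \<psi> i x * U i)" for x
  have \<phi>cont: "\<forall>l. continuous_on S (\<phi> l)"
    unfolding \<phi>_def by (intro allI continuous_intros \<psi>cont)
  have ucont: "continuous_on S u"
    unfolding u_def by (intro continuous_intros \<psi>cont)
  have err: "\<bar>h x x' - ((\<Sum>l<n. \<phi> l x * \<phi> l x') + u x + u x' + (- k0))\<bar> \<le> \<epsilon>"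
    if x: "x \<in> S" and x': "x' \<in> S" for x x'
  proof -
    define a where "a i = \<psi> i x" for i
    define b where "b j = \<psi> j x'" for j
    have sa: "(\<Sum>i<n. a i) = 1" unfolding a_def using \<psi>sum[OF x] .
    have sb: "(\<Sum>j<n. b j) = 1" unfolding b_def using \<psi>sum[OF x'] .
    have a0: "a i \<ge> 0" for i unfolding a_def using \<psi>0[OF x] .
    have b0: "b i \<ge> 0" for i unfolding b_def using \<psi>0[OF x'] .
    have b1: "b i \<le> 1" if "i < n" for i
    proof -
      have "b i \<le> (\<Sum>j<n. b j)" by (rule member_le_sum) (use that b0 in auto)
      then show ?thesis using sb by simp
    qed
    have disc: "\<bar>h x x' - (\<Sum>i<n. \<Sum>j<n. a i * b j * H i j)\<bar> \<le> \<epsilon>/2"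
    proof -
      have "(\<Sum>i<n. \<Sum>j<n. a i * b j) = 1" using sa sb by (simp add: sum_product[symmetric])
      then have "h x x' - (\<Sum>i<n. \<Sum>j<n. a i * b j * H i j) = (\<Sum>i<n. \<Sum>j<n. a i * b j * h x x') - (\<Sum>i<n. \<Sum>j<n. a i * b j * H i j)"
        by (simp add: sum_distrib_right[symmetric])
      also have "\<dots> = (\<Sum>i<n. \<Sum>j<n. a i * b j * (h x x' - H i j))"
        by (simp add: sum_subtractf algebra_simps)
      finally have eq: "h x x' - (\<Sum>i<n. \<Sum>j<n. a i * b j * H i j) = (\<Sum>i<n. \<Sum>j<n. a i * b j * (h x x' - H i j))" .
      have pt: "\<bar>a i * b j * (h x x' - H i j)\<bar> \<le> a i * b j * (\<epsilon>/2)" if "i < n" "j < n" for i j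
      proof (cases "a i = 0 \<or> b j = 0")
        case True then show ?thesis by auto
      next
        case False
        then have "dist x (pts i) < \<delta>1/2" "dist x' (pts j) < \<delta>1/2"
          using \<psi>supp[of i x] \<psi>supp[of j x'] unfolding a_def b_def \<delta>_def by auto
        then have "\<bar>h x x' - H i j\<bar> < \<epsilon>/2" unfolding H_def
          by (rule hclose[OF x x' pS[OF that(1)] pS[OF that(2)]])
        then have "\<bar>h x x' - H i j\<bar> \<le> \<epsilon>/2" by simp
        then have "(a i * b j) * \<bar>h x x' - H i j\<bar> \<le> (a i * b j) * (\<epsilon>/2)"
          using a0 b0 by (intro mult_left_mono) auto
        then show ?thesis using a0[of i] b0[of j] by (simp add: abs_mult)
      qed
      have "\<bar>\<Sum>i<n. \<Sum>j<n. a i * b j * (h x x' - H i j)\<bar> \<le> (\<Sum>i<n. \<Sum>j<n. \<bar>a i * b j * (h x x' - H i j)\<bar>)"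
        by (rule order_trans[OF sum_abs sum_mono[OF sum_abs]])
      also have "\<dots> \<le> (\<Sum>i<n. \<Sum>j<n. a i * b j * (\<epsilon>/2))"
        by (intro sum_mono pt) auto
      also have "\<dots> = (\<epsilon>/2) * (\<Sum>i<n. \<Sum>j<n. a i * b j)"
        by (simp add: sum_distrib_left algebra_simps)
      also have "\<dots> = \<epsilon>/2" using \<open>(\<Sum>i<n. \<Sum>j<n. a i * b j) = 1\<close> by simp
      finally show ?thesis unfolding eq .
    qed
    have ux': "(\<Sum>j<n. b j * V j) = u x'" unfolding u_def b_def by (rule sum.cong) (auto simp: UV)
    have ux: "(\<Sum>i<n. a i * U i) = u x" unfolding u_def a_def by simp
    have "(\<Sum>l<n. \<phi> l x * \<phi> l x') = (\<Sum>i<n. \<Sum>j<n. a i * b j * P i j)"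
      unfolding L \<phi>_def a_def b_def ..
    also have "\<dots> = (\<Sum>i<n. \<Sum>j<n. a i * b j * H i j) - u x - u x' + k0 + \<eta> * (\<Sum>i<n. a i * b i)"
      unfolding P_def bil_expand sa sb ux ux' by simp
    finally have id: "(\<Sum>l<n. \<phi> l x * \<phi> l x') + u x + u x' + (- k0) = (\<Sum>i<n. \<Sum>j<n. a i * b j * H i j) + \<eta> * (\<Sum>i<n. a i * b i)"
      by simp
    have ab0: "(\<Sum>i<n. a i * b i) \<ge> 0" using a0 b0 by (intro sum_nonneg) auto
    have ab1: "(\<Sum>i<n. a i * b i) \<le> 1"
    proof -
      have "(\<Sum>i<n. a i * b i) \<le> (\<Sum>i<n. a i * 1)"
        by (intro sum_mono mult_left_mono) (use a0 b1 in auto)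
      then show ?thesis using sa by simp
    qed
    have "\<eta> * (\<Sum>i<n. a i * b i) \<le> \<eta> * 1" using \<eta> ab1 by (intro mult_left_mono) auto
    moreover have "\<eta> * (\<Sum>i<n. a i * b i) \<ge> 0" using \<eta> ab0 by simp
    ultimately show ?thesis unfolding id using disc \<eta>_def by linarith
  qed
  show ?thesis
    by (rule exI[of _ n], rule exI[of _ \<phi>], rule exI[of _ u], rule exI[of _ "- k0"]) (use \<phi>cont ucont err in simp)
qed

lemma prod_err:
  fixes p p' F F' B \<eta> :: real
  assumes "\<bar>p - F\<bar> < \<eta>" "\<bar>p' - F'\<bar> < \<eta>" "\<bar>p\<bar> \<le> B" "\<bar>p'\<bar> \<le> B" "\<eta> \<le> 1"
  shows "\<bar>p * p' - F * F'\<bar> \<le> (2 * B + 1) * \<eta>"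
proof -
  have eq: "p * p' - F * F' = p * (p' - F') + F' * (p - F)" by (simp add: algebra_simps)
  have F': "\<bar>F'\<bar> \<le> B + 1" using assms(2,4,5) by linarith
  have "\<bar>p * (p' - F')\<bar> \<le> B * \<eta>" unfolding abs_mult
    by (rule mult_mono) (use assms in auto)
  moreover have "\<bar>F' * (p - F)\<bar> \<le> (B + 1) * \<eta>" unfolding abs_mult
    by (rule mult_mono) (use assms F' in auto)
  ultimately have "\<bar>p * (p' - F')\<bar> + \<bar>F' * (p - F)\<bar> \<le> (2 * B + 1) * \<eta>" by (simp add: algebra_simps)
  then show ?thesis unfolding eq by (rule order_trans[OF abs_triangle_ineq])
qed

lemma final_arith:
  fixes a b c \<epsilon> q C' t :: real
  assumes "\<bar>a\<bar> \<le> \<epsilon>/2" "\<bar>b\<bar> \<le> q" "\<bar>c\<bar> \<le> \<epsilon>/4" "q \<le> C' - t" "t > 0" "\<epsilon> > 0"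
  shows "\<bar>a - b + c\<bar> < \<epsilon> + C'"
  using assms by (simp only: abs_le_iff abs_less_iff) linarith

lemma cube_compact: "compact (cube M :: (real ^ 'p::finite) set)"
proof -
  have "cube M = cbox (\<chi> i. - M) (\<chi> i. M :: real ^ 'p)"
    unfolding cube_def by (auto simp: mem_box_cart abs_le_iff) (metis minus_le_iff)+
  then show ?thesis by simp
qed

lemma cube_nonempty: "M > 0 \<Longrightarrow> (0 :: real ^ 'p::finite) \<in> cube M"
  unfolding cube_def by simp

theorem theorem4p2:
  fixes M :: real and Y :: "(real ^ 'k) set"
    and f :: "real ^ 'p \<Rightarrow> real ^ 'k"
    and g :: "real ^ 'k \<Rightarrow> real ^ 'k \<Rightarrow> real"
    and \<sigma> :: "real \<Rightarrow> real"
  assumes "M > 0" and "compact Y"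
    and "continuous_on (cube M) f" and "f ` cube M \<subseteq> Y"
    and "cpd_kernel Y g"
    and "admissible_activation \<sigma>"
  shows "\<forall>\<epsilon>>0. \<exists>C>0. \<exists>r0>0. \<forall>r\<ge>r0.
     \<exists>(K::nat) (T::nat) (A::nat \<Rightarrow> nat \<Rightarrow> real) (B::nat \<Rightarrow> 'p \<Rightarrow> real) (c::nat \<Rightarrow> real) (\<gamma>::real).
       \<bar>\<gamma>\<bar> \<le> C * r\<^sup>2 \<and>
       (\<forall>x\<in>cube M. \<forall>x'\<in>cube M.
          \<bar>g (f x) (f x') - (innerK K (shallow_net \<sigma> T A B c x) (shallow_net \<sigma> T A B c x') - \<gamma>)\<bar>
            < \<epsilon> + C / r\<^sup>2)"
proof (intro allI impI)
  fix \<epsilon> :: real assume e: "\<epsilon> > 0"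
  note M = assms(1) and fc = assms(3) and fY = assms(4) and adm = assms(6)
  define S where "S = (cube M :: (real ^ 'p) set)"
  have S: "compact S" "S \<noteq> {}" unfolding S_def using cube_compact cube_nonempty[OF M] by auto
  have gk: "is_kernel Y g" and gcpd: "\<forall>(n::nat) (y::nat \<Rightarrow> real ^ 'k) (c::nat \<Rightarrow> real).
        (\<forall>i<n. y i \<in> Y) \<longrightarrow> (\<Sum>i<n. c i) = 0 \<longrightarrow> (\<Sum>i<n. \<Sum>j<n. c i * c j * g (y i) (y j)) \<ge> 0"
    using assms(5) unfolding cpd_kernel_def by auto
  have gsym: "\<forall>y\<in>Y. \<forall>z\<in>Y. g y z = g z y" and gcont: "continuous_on (Y \<times> Y) (\<lambda>(y, z). g y z)"
    using gk unfolding is_kernel_def by auto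
  define h where "h x x' = g (f x) (f x')" for x x'
  have fS: "x \<in> S \<Longrightarrow> f x \<in> Y" for x using fY unfolding S_def by auto
  have hc: "continuous_on (S \<times> S) (\<lambda>z. h (fst z) (snd z))"
  proof -
    have c1: "continuous_on (S \<times> S) (\<lambda>z. f (fst z))"
      by (rule continuous_on_compose2[OF fc[folded S_def] continuous_on_fst]) auto
    have c2: "continuous_on (S \<times> S) (\<lambda>z. f (snd z))"
      by (rule continuous_on_compose2[OF fc[folded S_def] continuous_on_snd]) auto
    have c3: "continuous_on (S \<times> S) (\<lambda>z. (f (fst z), f (snd z)))"
      by (rule continuous_on_Pair[OF c1 c2])
    have "continuous_on (S \<times> S) (\<lambda>z. (\<lambda>(y, z). g y z) (f (fst z), f (snd z)))"
      by (rule continuous_on_compose2[OF gcont c3]) (auto simp: fS)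
    then show ?thesis unfolding h_def by simp
  qed
  have hs: "\<forall>x\<in>S. \<forall>y\<in>S. h x y = h y x" unfolding h_def using gsym fS by auto
  have hcpd: "\<forall>(m::nat) (y::nat \<Rightarrow> real^'p) (c::nat \<Rightarrow> real). (\<forall>i<m. y i \<in> S) \<longrightarrow> (\<Sum>i<m. c i) = 0 \<longrightarrow>
        (\<Sum>i<m. \<Sum>j<m. c i * c j * h (y i) (y j)) \<ge> 0"
  proof (intro allI impI)
    fix m :: nat and y :: "nat \<Rightarrow> real ^ 'p" and c :: "nat \<Rightarrow> real"
    assume "\<forall>i<m. y i \<in> S" "(\<Sum>i<m. c i) = 0"
    moreover have "\<forall>i<m. f (y i) \<in> Y" using calculation(1) fS by auto
    moreover note spec[OF spec[OF spec[OF gcpd, of m], of "\<lambda>i. f (y i)"], of c]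
    ultimately show "(\<Sum>i<m. \<Sum>j<m. c i * c j * h (y i) (y j)) \<ge> 0"
      unfolding h_def by simp
  qed
  have e2: "\<epsilon>/2 > 0" using e by simp
  obtain n :: nat and \<phi> u \<kappa> where \<phi>c: "\<forall>l. continuous_on S (\<phi> l)" and uc: "continuous_on S u" and
    kap: "\<forall>x\<in>S. \<forall>x'\<in>S. \<bar>h x x' - ((\<Sum>l<n. \<phi> l x * \<phi> l x') + u x + u x' + \<kappa>)\<bar> \<le> \<epsilon>/2"
    using kernel_approx[OF S hc hs hcpd e2] by blast
  have "bounded (u ` S)" by (rule compact_imp_bounded[OF compact_continuous_image[OF uc S(1)]])
  then obtain Bu where Bu: "\<And>x. x \<in> S \<Longrightarrow> \<bar>u x\<bar> \<le> Bu" unfolding bounded_iff by auto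
  define C where "C = 1 + \<bar>\<kappa>\<bar> + Bu\<^sup>2"
  have C: "C > 0" unfolding C_def by (simp add: add_pos_nonneg)
  have main: "\<forall>r\<ge>1.
     \<exists>(K::nat) (T::nat) (A::nat \<Rightarrow> nat \<Rightarrow> real) (B::nat \<Rightarrow> 'p \<Rightarrow> real) (c::nat \<Rightarrow> real) (\<gamma>::real).
       \<bar>\<gamma>\<bar> \<le> C * r\<^sup>2 \<and>
       (\<forall>x\<in>cube M. \<forall>x'\<in>cube M.
          \<bar>g (f x) (f x') - (innerK K (shallow_net \<sigma> T A B c x) (shallow_net \<sigma> T A B c x') - \<gamma>)\<bar>
            < \<epsilon> + C / r\<^sup>2)"
  proof (intro allI impI)
    fix r :: real assume r1: "r \<ge> 1"
    have r: "r > 0" using r1 by simp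
    define \<Phi> where "\<Phi> l x = (if l < n then \<phi> l x else r + u x / r)" for l x
    have \<Phi>c: "continuous_on S (\<Phi> l)" for l
      unfolding \<Phi>_def by (cases "l < n") (use \<phi>c uc r in \<open>auto intro!: continuous_intros\<close>)
    have "continuous_on S (\<lambda>x. \<Sum>l<Suc n. \<bar>\<Phi> l x\<bar>)"
      by (intro continuous_intros \<Phi>c)
    then have "bounded ((\<lambda>x. \<Sum>l<Suc n. \<bar>\<Phi> l x\<bar>) ` S)"
      by (rule compact_imp_bounded[OF compact_continuous_image[OF _ S(1)]])
    then obtain B0 where B0: "\<And>x. x \<in> S \<Longrightarrow> \<bar>\<Sum>l<Suc n. \<bar>\<Phi> l x\<bar>\<bar> \<le> B0" unfolding bounded_iff by auto
    define Bd where "Bd = \<bar>B0\<bar>"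
    have Bd0: "Bd \<ge> 0" unfolding Bd_def by simp
    have \<Phi>B: "\<bar>\<Phi> l x\<bar> \<le> Bd" if "l < Suc n" "x \<in> S" for l x
    proof -
      have "\<bar>\<Phi> l x\<bar> \<le> (\<Sum>l<Suc n. \<bar>\<Phi> l x\<bar>)" by (rule member_le_sum) (use that in auto)
      also have "\<dots> \<le> B0" using B0[OF that(2)] by simp
      finally show ?thesis unfolding Bd_def by simp
    qed
    define K where "K = Suc n"
    define \<eta> where "\<eta> = min 1 ((\<epsilon>/4) / (real K * (2 * Bd + 1)))"
    have \<eta>: "\<eta> > 0" "\<eta> \<le> 1" unfolding \<eta>_def K_def using e Bd0 by (auto simp: add_nonneg_pos)
    have \<eta>K: "real K * ((2 * Bd + 1) * \<eta>) \<le> \<epsilon>/4"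
    proof -
      have pos: "real K * (2 * Bd + 1) > 0" unfolding K_def using Bd0 by (simp add: add_nonneg_pos)
      have "\<eta> \<le> (\<epsilon>/4) / (real K * (2 * Bd + 1))" unfolding \<eta>_def by simp
      then have "\<eta> * (real K * (2 * Bd + 1)) \<le> \<epsilon>/4" using pos by (simp add: le_divide_eq)
      then show ?thesis by (simp add: algebra_simps)
    qed
    have "\<forall>l. \<exists>F. l < K \<longrightarrow> isnet \<sigma> F \<and> (\<forall>x\<in>S. \<bar>\<Phi> l x - F x 0\<bar> < \<eta>)"
      using universal_approx[OF adm S(1) \<Phi>c \<eta>(1)] by blast
    then obtain Fs where Fs: "\<And>l. l < K \<Longrightarrow> isnet \<sigma> (Fs l)"
      "\<And>l x. l < K \<Longrightarrow> x \<in> S \<Longrightarrow> \<bar>\<Phi> l x - Fs l x 0\<bar> < \<eta>"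
      by (metis choice)
    define G where "G x k = (\<Sum>l<K. if k = l then Fs l x 0 else 0)" for x k
    have "isnet \<sigma> (\<lambda>x k. \<Sum>l<K. if k = l then Fs l x 0 else 0)"
      by (intro isnet_sum isnet_select Fs)
    then obtain T A Bm cm where net: "\<And>x k. G x k = shallow_net \<sigma> T A Bm cm x k"
      unfolding isnet_def G_def by blast
    have Gk: "G x k = Fs k x 0" if "k < K" for x k
      unfolding G_def using that by (simp add: sum.delta)
    define \<gamma> where "\<gamma> = r\<^sup>2 - \<kappa>"
    have inn: "innerK K (shallow_net \<sigma> T A Bm cm x) (shallow_net \<sigma> T A Bm cm x') = (\<Sum>l<K. Fs l x 0 * Fs l x' 0)" for x x'
      unfolding innerK_def net[symmetric] by (rule sum.cong) (auto simp: Gk)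
    have "\<bar>\<gamma>\<bar> \<le> C * r\<^sup>2"
    proof -
      have "\<bar>\<gamma>\<bar> \<le> r\<^sup>2 + \<bar>\<kappa>\<bar>" unfolding \<gamma>_def using abs_triangle_ineq4[of "r\<^sup>2" \<kappa>] by simp
      also have "\<dots> \<le> r\<^sup>2 + \<bar>\<kappa>\<bar> * r\<^sup>2"
      proof -
        have "1 \<le> r\<^sup>2" using r1 by (simp add: one_le_power)
        then show ?thesis by (simp add: mult_left_mono[of 1 "r\<^sup>2" "\<bar>\<kappa>\<bar>", simplified])
      qed
      also have "\<dots> \<le> C * r\<^sup>2" unfolding C_def by (simp add: algebra_simps)
      finally show ?thesis .
    qed
    moreover have "\<bar>g (f x) (f x') - (innerK K (shallow_net \<sigma> T A Bm cm x) (shallow_net \<sigma> T A Bm cm x') - \<gamma>)\<bar>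
            < \<epsilon> + C / r\<^sup>2" if x: "x \<in> cube M" and x': "x' \<in> cube M" for x x'
    proof -
      have xS: "x \<in> S" and x'S: "x' \<in> S" using x x' unfolding S_def by auto
      have sumPhi: "(\<Sum>l<K. \<Phi> l x * \<Phi> l x') = (\<Sum>l<n. \<phi> l x * \<phi> l x') + (r + u x / r) * (r + u x' / r)"
      proof -
        have "(\<Sum>l<n. \<Phi> l x * \<Phi> l x') = (\<Sum>l<n. \<phi> l x * \<phi> l x')"
          by (rule sum.cong) (auto simp: \<Phi>_def)
        then show ?thesis unfolding K_def by (simp add: \<Phi>_def)
      qed
      have expand: "(r + u x / r) * (r + u x' / r) = r\<^sup>2 + u x + u x' + u x * u x' / r\<^sup>2"
        using r by (simp add: field_simps power2_eq_square)
      have netErr: "\<bar>(\<Sum>l<K. \<Phi> l x * \<Phi> l x') - (\<Sum>l<K. Fs l x 0 * Fs l x' 0)\<bar> \<le> \<epsilon>/4"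
      proof -
        have "\<bar>(\<Sum>l<K. \<Phi> l x * \<Phi> l x') - (\<Sum>l<K. Fs l x 0 * Fs l x' 0)\<bar>
            = \<bar>\<Sum>l<K. \<Phi> l x * \<Phi> l x' - Fs l x 0 * Fs l x' 0\<bar>" by (simp add: sum_subtractf)
        also have "\<dots> \<le> (\<Sum>l<K. \<bar>\<Phi> l x * \<Phi> l x' - Fs l x 0 * Fs l x' 0\<bar>)" by (rule sum_abs)
        also have "\<dots> \<le> (\<Sum>l<K. (2 * Bd + 1) * \<eta>)"
        proof (rule sum_mono)
          fix l assume "l \<in> {..<K}"
          then have l: "l < K" by simp
          show "\<bar>\<Phi> l x * \<Phi> l x' - Fs l x 0 * Fs l x' 0\<bar> \<le> (2 * Bd + 1) * \<eta>"
            by (rule prod_err[OF Fs(2)[OF l xS] Fs(2)[OF l x'S] \<Phi>B \<Phi>B \<eta>(2)])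
              (use l xS x'S K_def in auto)
        qed
        also have "\<dots> = real K * ((2 * Bd + 1) * \<eta>)" by simp
        also have "\<dots> \<le> \<epsilon>/4" by (rule \<eta>K)
        finally show ?thesis .
      qed
      have uu: "\<bar>u x * u x' / r\<^sup>2\<bar> \<le> Bu\<^sup>2 / r\<^sup>2"
      proof -
        have "\<bar>u x * u x'\<bar> \<le> Bu * Bu" unfolding abs_mult
          by (rule mult_mono) (use Bu[OF xS] Bu[OF x'S] in auto)
        then show ?thesis using r by (simp add: abs_mult power2_eq_square divide_right_mono)
      qed
      have k1: "\<bar>h x x' - ((\<Sum>l<n. \<phi> l x * \<phi> l x') + u x + u x' + \<kappa>)\<bar> \<le> \<epsilon>/2"
        using kap xS x'S by blast
      have CB: "Bu\<^sup>2 / r\<^sup>2 \<le> C / r\<^sup>2 - 1 / r\<^sup>2"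
        unfolding C_def using r by (simp add: divide_right_mono diff_divide_distrib[symmetric])
      have "1 / r\<^sup>2 > 0" using r by simp
      have key: "g (f x) (f x') - ((\<Sum>l<K. Fs l x 0 * Fs l x' 0) - \<gamma>) =
          (h x x' - ((\<Sum>l<n. \<phi> l x * \<phi> l x') + u x + u x' + \<kappa>)) - u x * u x' / r\<^sup>2
          + ((\<Sum>l<K. \<Phi> l x * \<Phi> l x') - (\<Sum>l<K. Fs l x 0 * Fs l x' 0))"
        unfolding h_def sumPhi expand \<gamma>_def by simp
      show ?thesis unfolding inn key by (rule final_arith[OF k1 uu netErr CB \<open>1 / r\<^sup>2 > 0\<close> e])
    qed
    ultimately show "\<exists>(K::nat) (T::nat) (A::nat \<Rightarrow> nat \<Rightarrow> real) (B::nat \<Rightarrow> 'p \<Rightarrow> real) (c::nat \<Rightarrow> real) (\<gamma>::real).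
       \<bar>\<gamma>\<bar> \<le> C * r\<^sup>2 \<and>
       (\<forall>x\<in>cube M. \<forall>x'\<in>cube M.
          \<bar>g (f x) (f x') - (innerK K (shallow_net \<sigma> T A B c x) (shallow_net \<sigma> T A B c x') - \<gamma>)\<bar>
            < \<epsilon> + C / r\<^sup>2)"
      by blast
  qed
  show "\<exists>C>0. \<exists>r0>0. \<forall>r\<ge>r0.
     \<exists>(K::nat) (T::nat) (A::nat \<Rightarrow> nat \<Rightarrow> real) (B::nat \<Rightarrow> 'p \<Rightarrow> real) (c::nat \<Rightarrow> real) (\<gamma>::real).
       \<bar>\<gamma>\<bar> \<le> C * r\<^sup>2 \<and>
       (\<forall>x\<in>cube M. \<forall>x'\<in>cube M.
          \<bar>g (f x) (f x') - (innerK K (shallow_net \<sigma> T A B c x) (shallow_net \<sigma> T A B c x') - \<gamma>)\<bar>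
            < \<epsilon> + C / r\<^sup>2)"
    by (rule exI[of _ C], rule conjI[OF C], rule exI[of _ 1], rule conjI[OF zero_less_one], rule main)
qed

end
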